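(* In the IM-OCP setting described in the context, with $r_1\in[0,B]$ and any non-increasing sequence of positive step sizes $(\eta_t)_{t\ge1}$, for every $T\ge1$, $$\overline{\mathrm{Reg}}(T):=\mathbb{E}\left[\sum_{i=1}^T\ell_{1-\alpha}(r_i,r_i^* )\frac{\mathrm{obs}_i}{p_i}\right]-\min_{u\in\mathbb{R}}\sum_{i=1}^T\ell_{1-\alpha}(u,r_i^* )\le\frac{\mathbb{E}[D_T]}{\eta_T}+\frac{1}{2\mu\,p_{\min}}\sum_{i=1}^T\eta_i,$$ where $p_{\min}=\min_{t\in\{1,\dots,T\}}p_t$, $D_T=\max_{t\in\{1,\dots,T\}}\mathcal{B}_R\big(q_\alpha(r^*_{1:T}),r_t\big)$, and expectations are over the feedback indicators $(\mathrm{obs}_t)$.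
   Context: Fix $\alpha\in(0,1)$ and $B>0$. Let $(r_t^* )_{t\ge1}$ be an arbitrary deterministic sequence of scores with $r_t^*\in[0,B]$. Given thresholds $r_t$, the miscoverage indicator is $E_t=\mathbb{1}\{r_t^*>r_t\}$. The quantile loss is $\ell_{1-\alpha}(r,r^* )=(\alpha-\mathbb{1}\{r<r^*\})(r-r^* )$, and $q_\alpha(r^*_{1:T})$ denotes a minimizer over $u\in\mathbb{R}$ of $\sum_{t=1}^T\ell_{1-\alpha}(u,r_t^* )$. Let $P$ be a probability distribution on $[0,B]$ with bounded density, $\sigma>0$, and $R(r)=\mathbb{E}_{r^*\sim P}[\ell_{1-\alpha}(r,r^* )]+\frac{\sigma}{2}r^2$; $R$ is differentiable and $\nabla R$ is a continuous strictly increasing bijection of $\mathbb{R}$. Let $\mu>0$ be a constant such that $R$ is $\mu$-strongly convex (e.g. $\mu=\sigma$). The Bregman divergence of $R$ is $\mathcal{B}_R(u,v)=R(u)-R(v)-\nabla R(v)(u-v)$. Feedback: $p_t\in(0,1]$ and $(\mathrm{obs}_t)_{t\ge1}$ are independent Bernoulli random variables with $\Pr(\mathrm{obs}_t=1)=p_t$. IM-OCP: given $r_1$ and step sizes $\eta_t>0$, for $t\ge2$ the threshold $r_t$ is defined by $$\nabla R(r_t)=\nabla R(r_{t-1})-\eta_{t-1}(\alpha-E_{t-1})\frac{\mathrm{obs}_{t-1}}{p_{t-1}}.$$ *)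

theory Defs
  imports "HOL-Analysis.Analysis" "HOL-Probability.Probability"
begin

definition qloss :: "real \<Rightarrow> real \<Rightarrow> real \<Rightarrow> real" where
  "qloss \<alpha> r rs = (\<alpha> - (if r < rs then 1 else 0)) * (r - rs)"

definition Rreg :: "real \<Rightarrow> real \<Rightarrow> (real \<Rightarrow> real) \<Rightarrow> real \<Rightarrow> real" where
  "Rreg \<alpha> \<sigma> f r = (\<integral>x. f x * qloss \<alpha> r x \<partial>lborel) + \<sigma> / 2 * r\<^sup>2"

definition strongly_convex :: "real \<Rightarrow> (real \<Rightarrow> real) \<Rightarrow> bool" where
  "strongly_convex \<mu> F \<longleftrightarrow> (\<forall>x y t. 0 \<le> t \<and> t \<le> 1 \<longrightarrow>
     F (t * x + (1 - t) * y) \<le> t * F x + (1 - t) * F y - \<mu> / 2 * t * (1 - t) * (x - y)\<^sup>2)"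

definition bregman :: "(real \<Rightarrow> real) \<Rightarrow> (real \<Rightarrow> real) \<Rightarrow> real \<Rightarrow> real \<Rightarrow> real" where
  "bregman F dF u v = F u - F v - dF v * (u - v)"

text \<open>IM-OCP thresholds r_t (t \<ge> 1; index 0 is a dummy copy of r_1) as a function of the
  feedback realisation obs.\<close>
fun imocp :: "(real \<Rightarrow> real) \<Rightarrow> real \<Rightarrow> (nat \<Rightarrow> real) \<Rightarrow> (nat \<Rightarrow> real) \<Rightarrow> (nat \<Rightarrow> real)
              \<Rightarrow> real \<Rightarrow> (nat \<Rightarrow> bool) \<Rightarrow> nat \<Rightarrow> real" where
  "imocp dF \<alpha> \<eta> p rs r1 obs 0 = r1"
| "imocp dF \<alpha> \<eta> p rs r1 obs (Suc 0) = r1"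
| "imocp dF \<alpha> \<eta> p rs r1 obs (Suc (Suc n)) =
     (let r = imocp dF \<alpha> \<eta> p rs r1 obs (Suc n);
          E = (if rs (Suc n) > r then 1 else 0)
      in inv dF (dF r - \<eta> (Suc n) * (\<alpha> - E) * (if obs (Suc n) then 1 else 0) / p (Suc n)))"

end

theory Submission
  imports Defs
begin


lemma sc_lower:
  fixes F dF :: "real \<Rightarrow> real"
  assumes sc: "strongly_convex \<mu> F"
    and d: "\<And>x. (F has_real_derivative dF x) (at x)"
  shows "F v + dF v * (u - v) + \<mu> / 2 * (u - v)\<^sup>2 \<le> F u"
proof -
  define G where "G = (\<lambda>t. F (v + t * (u - v)))"
  have d1: "((\<lambda>t. v + t * (u - v)) has_real_derivative (u - v)) (at 0)"
    by (auto intro!: derivative_eq_intros)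
  have d2: "(F has_real_derivative dF v) (at (v + 0 * (u - v)))" using d by simp
  have "(G has_real_derivative dF v * (u - v)) (at 0)"
    unfolding G_def using DERIV_chain2[OF d2 d1] by simp
  hence lim1: "((\<lambda>h. (G (0 + h) - G 0) / h) \<longlongrightarrow> dF v * (u - v)) (at 0)"
    by (simp add: DERIV_def)
  hence lim: "((\<lambda>h. (G (0 + h) - G 0) / h) \<longlongrightarrow> dF v * (u - v)) (at_right 0)"
    by (rule tendsto_mono[rotated]) (simp add: at_le)
  have lim2: "((\<lambda>t. F u - F v - \<mu> / 2 * (1 - t) * (u - v)\<^sup>2) \<longlongrightarrow> F u - F v - \<mu> / 2 * (1 - 0) * (u - v)\<^sup>2) (at_right 0)"
    by (intro tendsto_intros)
  have ev: "eventually (\<lambda>t. (G (0 + t) - G 0) / t \<le> F u - F v - \<mu> / 2 * (1 - t) * (u - v)\<^sup>2) (at_right 0)"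
    unfolding eventually_at_right_field
  proof (intro exI[of _ 1] conjI allI impI)
    fix t :: real assume t: "0 < t" "t < 1"
    have "F (t * u + (1 - t) * v) \<le> t * F u + (1 - t) * F v - \<mu> / 2 * t * (1 - t) * (u - v)\<^sup>2"
      using sc t unfolding strongly_convex_def by auto
    moreover have "t * u + (1 - t) * v = v + t * (u - v)" by (simp add: algebra_simps)
    ultimately have "G t - G 0 \<le> t * (F u - F v - \<mu> / 2 * (1 - t) * (u - v)\<^sup>2)"
      unfolding G_def by (simp add: algebra_simps)
    thus "(G (0 + t) - G 0) / t \<le> F u - F v - \<mu> / 2 * (1 - t) * (u - v)\<^sup>2"
      using t by (simp add: divide_le_eq mult.commute)
  qed simp
  have "dF v * (u - v) \<le> F u - F v - \<mu> / 2 * (1 - 0) * (u - v)\<^sup>2"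
    by (rule tendsto_le[OF _ lim2 lim ev]) simp
  thus ?thesis by simp
qed

lemma qloss_sub:
  "qloss \<alpha> r rs - qloss \<alpha> q rs \<le> (\<alpha> - (if rs > r then 1 else 0)) * (r - q)"
  unfolding qloss_def by (auto simp: algebra_simps)

lemma step:
  fixes F dF :: "real \<Rightarrow> real"
  assumes lower: "\<And>u v. F v + dF v * (u - v) + \<mu> / 2 * (u - v)\<^sup>2 \<le> F u"
    and mu: "0 < \<mu>" and eta: "0 < \<eta>" and P: "0 < P" and ob: "ob = 0 \<or> ob = 1"
    and alpha: "0 \<le> \<alpha>" "\<alpha> \<le> 1"
    and rec: "dF r' = dF r - \<eta> * (\<alpha> - (if rs > r then 1 else 0)) * ob / P"
  shows "qloss \<alpha> r rs * ob / P - qloss \<alpha> q rs * ob / P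
     \<le> (bregman F dF q r - bregman F dF q r') / \<eta> + \<eta> * ob / (2 * \<mu> * P\<^sup>2)"
proof -
  define Ev :: real where "Ev = (if rs > r then 1 else 0)"
  define g where "g = (\<alpha> - Ev) * ob / P"
  define d where "d = r - r'"
  have oP: "0 \<le> ob / P" using ob P by auto
  have "qloss \<alpha> r rs * ob / P - qloss \<alpha> q rs * ob / P = (ob / P) * (qloss \<alpha> r rs - qloss \<alpha> q rs)"
    by (simp add: algebra_simps)
  also have "\<dots> \<le> (ob / P) * ((\<alpha> - Ev) * (r - q))"
    using qloss_sub[of \<alpha> r rs q] oP unfolding Ev_def by (intro mult_left_mono) auto
  also have "\<dots> = g * (r - q)" unfolding g_def by simp
  finally have s1: "qloss \<alpha> r rs * ob / P - qloss \<alpha> q rs * ob / P \<le> g * (r - q)" .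
  have gdef: "dF r - dF r' = \<eta> * g" using rec unfolding g_def Ev_def by simp
  have id: "(dF r - dF r') * (r - q) = bregman F dF q r - bregman F dF q r' + bregman F dF r r'"
    unfolding bregman_def by (simp add: algebra_simps)
  have id2: "bregman F dF r r' + bregman F dF r' r = (dF r - dF r') * d"
    unfolding bregman_def d_def by (simp add: algebra_simps)
  have lb: "bregman F dF r' r \<ge> \<mu> / 2 * d\<^sup>2"
    using lower[of r r'] unfolding bregman_def d_def by (simp add: power2_commute)
  have amgm: "\<eta> * g * d - \<mu> / 2 * d\<^sup>2 \<le> \<eta>\<^sup>2 * g\<^sup>2 / (2 * \<mu>)"
  proof -
    have "0 \<le> (\<mu> * d - \<eta> * g)\<^sup>2" by simp
    hence "2 * \<mu> * (\<eta> * g * d - \<mu> / 2 * d\<^sup>2) \<le> \<eta>\<^sup>2 * g\<^sup>2"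
      by (simp add: power2_eq_square algebra_simps)
    thus ?thesis using mu by (simp add: le_divide_eq mult.commute)
  qed
  have brr: "bregman F dF r r' \<le> \<eta>\<^sup>2 * g\<^sup>2 / (2 * \<mu>)"
    using id2 lb amgm gdef by (simp add: algebra_simps)
  have g2: "g\<^sup>2 \<le> ob / P\<^sup>2"
  proof -
    have "\<bar>\<alpha> - Ev\<bar> \<le> 1" using alpha unfolding Ev_def by auto
    hence "(\<alpha> - Ev)\<^sup>2 \<le> 1" by (metis abs_ge_zero power2_abs power_le_one)
    moreover have "ob\<^sup>2 = ob" using ob by auto
    ultimately have "(\<alpha> - Ev)\<^sup>2 * ob \<le> ob" using ob by auto
    thus ?thesis unfolding g_def using P by (simp add: power_divide power_mult_distrib divide_right_mono \<open>ob\<^sup>2 = ob\<close>)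
  qed
  have "g * (r - q) = (bregman F dF q r - bregman F dF q r' + bregman F dF r r') / \<eta>"
    using id gdef eta by (simp add: field_simps)
  also have "\<dots> \<le> (bregman F dF q r - bregman F dF q r') / \<eta> + \<eta> * g\<^sup>2 / (2 * \<mu>)"
  proof -
    have "bregman F dF r r' / \<eta> \<le> \<eta>\<^sup>2 * g\<^sup>2 / (2 * \<mu>) / \<eta>"
      by (rule divide_right_mono[OF brr]) (use eta in auto)
    also have "\<dots> = \<eta> * g\<^sup>2 / (2 * \<mu>)" using eta by (simp add: power2_eq_square)
    finally show ?thesis by (simp add: add_divide_distrib diff_divide_distrib)
  qed
  also have "\<dots> \<le> (bregman F dF q r - bregman F dF q r') / \<eta> + \<eta> * (ob / P\<^sup>2) / (2 * \<mu>)"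
    using g2 eta mu by (intro add_left_mono divide_right_mono mult_left_mono) auto
  finally show ?thesis using s1 by (simp add: mult.commute)
qed

lemma telescope:
  fixes a \<eta> :: "nat \<Rightarrow> real"
  assumes eta_pos: "\<And>t. 1 \<le> t \<Longrightarrow> 0 < \<eta> t"
    and eta_mono: "\<And>s t. 1 \<le> s \<Longrightarrow> s \<le> t \<Longrightarrow> \<eta> t \<le> \<eta> s"
    and a: "\<And>t. 1 \<le> t \<Longrightarrow> 0 \<le> a t"
    and T: "1 \<le> T"
  shows "(\<forall>t\<in>{1..T}. a t \<le> D) \<longrightarrow> (\<Sum>t=1..T. (a t - a (Suc t)) / \<eta> t) \<le> D / \<eta> T - a (Suc T) / \<eta> T"
  using T
proof (induction T rule: nat_induct_at_least)
  case base
  then show ?case using eta_pos[of 1] by (auto simp: diff_divide_distrib divide_right_mono)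
next
  case (Suc n)
  show ?case
  proof
    assume H: "\<forall>t\<in>{1..Suc n}. a t \<le> D"
    have "(\<Sum>t=1..Suc n. (a t - a (Suc t)) / \<eta> t)
        = (\<Sum>t=1..n. (a t - a (Suc t)) / \<eta> t) + (a (Suc n) - a (Suc (Suc n))) / \<eta> (Suc n)"
      using Suc.hyps by simp
    also have "\<dots> \<le> D / \<eta> n - a (Suc n) / \<eta> n + (a (Suc n) - a (Suc (Suc n))) / \<eta> (Suc n)"
      using Suc.IH H by auto
    also have "\<dots> \<le> D / \<eta> (Suc n) - a (Suc (Suc n)) / \<eta> (Suc n)"
    proof -
      have e1: "0 < \<eta> n" "0 < \<eta> (Suc n)" "\<eta> (Suc n) \<le> \<eta> n"
        using Suc.hyps eta_pos eta_mono by auto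
      have "1 / \<eta> n \<le> 1 / \<eta> (Suc n)" using e1 by (simp add: frac_le)
      moreover have "0 \<le> D - a (Suc n)" using H Suc.hyps by auto
      ultimately have "(D - a (Suc n)) * (1 / \<eta> n) \<le> (D - a (Suc n)) * (1 / \<eta> (Suc n))"
        by (intro mult_left_mono)
      thus ?thesis by (simp add: diff_divide_distrib add_divide_distrib algebra_simps)
    qed
    finally show "(\<Sum>t=1..Suc n. (a t - a (Suc t)) / \<eta> t) \<le> D / \<eta> (Suc n) - a (Suc (Suc n)) / \<eta> (Suc n)" .
  qed
qed

lemma comp_exp:
  fixes p :: "nat \<Rightarrow> real"
  assumes "finite A" "i \<in> A" "0 \<le> p i" "p i \<le> 1"
  shows "measure_pmf.expectation (Pi_pmf A False (\<lambda>t. bernoulli_pmf (p t)))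
           (\<lambda>obs. c * (if obs i then 1 else 0)) = c * p i"
proof -
  have "measure_pmf.expectation (Pi_pmf A False (\<lambda>t. bernoulli_pmf (p t)))
           (\<lambda>obs. (\<lambda>b. c * (if b then 1 else 0 :: real)) (obs i))
      = measure_pmf.expectation (map_pmf (\<lambda>f. f i) (Pi_pmf A False (\<lambda>t. bernoulli_pmf (p t))))
           (\<lambda>b. c * (if b then 1 else 0))" by simp
  also have "\<dots> = measure_pmf.expectation (bernoulli_pmf (p i)) (\<lambda>b. c * (if b then 1 else 0))"
    using assms by (simp add: Pi_pmf_component)
  also have "\<dots> = c * p i" using assms by simp
  finally show ?thesis by simp
qed

lemma finite_Pi_bern: "finite A \<Longrightarrow> finite (set_pmf (Pi_pmf A False (\<lambda>t. bernoulli_pmf (p t))))"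
  by (simp add: set_Pi_pmf finite_PiE_dflt)

theorem theorem2:
  fixes \<alpha> B \<sigma> \<mu> r1 :: real and rs \<eta> p :: "nat \<Rightarrow> real"
    and f dR :: "real \<Rightarrow> real" and T :: nat and q :: real
  assumes alpha: "0 < \<alpha>" "\<alpha> < 1"
    and B: "0 < B"
    and rs: "\<And>t. 1 \<le> t \<Longrightarrow> 0 \<le> rs t \<and> rs t \<le> B"
    and f_meas: "f \<in> borel_measurable borel"
    and f_nonneg: "\<And>x. 0 \<le> f x"
    and f_bdd: "\<exists>K. \<forall>x. f x \<le> K"
    and f_supp: "\<And>x. x \<notin> {0..B} \<Longrightarrow> f x = 0"
    and f_prob: "integrable lborel f" "(\<integral>x. f x \<partial>lborel) = 1"
    and sigma: "0 < \<sigma>"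
    and dR: "\<And>x. (Rreg \<alpha> \<sigma> f has_real_derivative dR x) (at x)"
    and dR_props: "continuous_on UNIV dR" "strict_mono dR" "bij dR"
    and mu: "0 < \<mu>" "strongly_convex \<mu> (Rreg \<alpha> \<sigma> f)"
    and p: "\<And>t. 1 \<le> t \<Longrightarrow> 0 < p t \<and> p t \<le> 1"
    and r1: "0 \<le> r1" "r1 \<le> B"
    and eta_pos: "\<And>t. 1 \<le> t \<Longrightarrow> 0 < \<eta> t"
    and eta_mono: "\<And>s t. 1 \<le> s \<Longrightarrow> s \<le> t \<Longrightarrow> \<eta> t \<le> \<eta> s"
    and T: "1 \<le> T"
    and q: "\<And>u. (\<Sum>i=1..T. qloss \<alpha> q (rs i)) \<le> (\<Sum>i=1..T. qloss \<alpha> u (rs i))"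
  shows
    "measure_pmf.expectation (Pi_pmf {1..T} False (\<lambda>t. bernoulli_pmf (p t)))
        (\<lambda>obs. \<Sum>i=1..T. qloss \<alpha> (imocp dR \<alpha> \<eta> p rs r1 obs i) (rs i)
                          * (if obs i then 1 else 0) / p i)
      - (INF u. \<Sum>i=1..T. qloss \<alpha> u (rs i))
     \<le> measure_pmf.expectation (Pi_pmf {1..T} False (\<lambda>t. bernoulli_pmf (p t)))
          (\<lambda>obs. Max ((\<lambda>t. bregman (Rreg \<alpha> \<sigma> f) dR q (imocp dR \<alpha> \<eta> p rs r1 obs t)) ` {1..T}))
        / \<eta> T
      + 1 / (2 * \<mu> * Min (p ` {1..T})) * (\<Sum>i=1..T. \<eta> i)"
proof -
  let ?M = "Pi_pmf {1..T} False (\<lambda>t. bernoulli_pmf (p t))"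
  let ?F = "Rreg \<alpha> \<sigma> f"
  let ?X = "\<lambda>obs. \<Sum>i=1..T. qloss \<alpha> (imocp dR \<alpha> \<eta> p rs r1 obs i) (rs i) * (if obs i then 1 else 0) / p i"
  let ?Y = "\<lambda>obs. Max ((\<lambda>t. bregman (Rreg \<alpha> \<sigma> f) dR q (imocp dR \<alpha> \<eta> p rs r1 obs t)) ` {1..T})"
  let ?L = "\<lambda>obs. \<Sum>i=1..T. qloss \<alpha> q (rs i) * (if obs i then 1 else 0) / p i"
  let ?Z = "\<lambda>obs. \<Sum>i=1..T. \<eta> i * (if obs i then 1 else 0) / (2 * \<mu> * (p i)\<^sup>2)"
  have lower: "\<And>u v. ?F v + dR v * (u - v) + \<mu> / 2 * (u - v)\<^sup>2 \<le> ?F u"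
    by (rule sc_lower[OF mu(2) dR])
  have bnn: "\<And>u v. 0 \<le> bregman ?F dR u v"
  proof -
    fix u v
    have "0 \<le> \<mu> / 2 * (u - v)\<^sup>2" using mu by simp
    thus "0 \<le> bregman ?F dR u v" using lower[of v u] unfolding bregman_def by linarith
  qed
  have surj: "surj dR" using dR_props(3) by (simp add: bij_is_surj)
  have rec: "\<And>obs t. 1 \<le> t \<Longrightarrow> dR (imocp dR \<alpha> \<eta> p rs r1 obs (Suc t)) =
      dR (imocp dR \<alpha> \<eta> p rs r1 obs t) - \<eta> t * (\<alpha> - (if rs t > imocp dR \<alpha> \<eta> p rs r1 obs t then 1 else 0))
        * (if obs t then 1 else 0) / p t"
  proof -
    fix obs and t :: nat assume "1 \<le> t"
    then obtain n where t: "t = Suc n" by (cases t) auto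
    show "?thesis obs t" unfolding t by (simp add: Let_def surj_f_inv_f[OF surj])
  qed
  have path: "?X obs \<le> ?L obs + ?Y obs / \<eta> T + ?Z obs" for obs
  proof -
    let ?r = "imocp dR \<alpha> \<eta> p rs r1 obs"
    let ?a = "\<lambda>t. bregman ?F dR q (?r t)"
    have st: "qloss \<alpha> (?r i) (rs i) * (if obs i then 1 else 0) / p i - qloss \<alpha> q (rs i) * (if obs i then 1 else 0) / p i
       \<le> (?a i - ?a (Suc i)) / \<eta> i + \<eta> i * (if obs i then 1 else 0) / (2 * \<mu> * (p i)\<^sup>2)"
      if i: "i \<in> {1..T}" for i
      using i p[of i] by (intro step[OF lower mu(1)] rec eta_pos) (auto simp: alpha less_imp_le)
    have "?X obs - ?L obs = (\<Sum>i=1..T. qloss \<alpha> (?r i) (rs i) * (if obs i then 1 else 0) / p i - qloss \<alpha> q (rs i) * (if obs i then 1 else 0) / p i)"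
      by (simp add: sum_subtractf)
    also have "\<dots> \<le> (\<Sum>i=1..T. (?a i - ?a (Suc i)) / \<eta> i + \<eta> i * (if obs i then 1 else 0) / (2 * \<mu> * (p i)\<^sup>2))"
      by (rule sum_mono) (rule st)
    also have "\<dots> = (\<Sum>i=1..T. (?a i - ?a (Suc i)) / \<eta> i) + ?Z obs"
      by (simp add: sum.distrib)
    also have "\<dots> \<le> ?Y obs / \<eta> T - ?a (Suc T) / \<eta> T + ?Z obs"
    proof -
      have "(\<Sum>i=1..T. (?a i - ?a (Suc i)) / \<eta> i) \<le> ?Y obs / \<eta> T - ?a (Suc T) / \<eta> T"
        using telescope[of \<eta> ?a T "?Y obs", OF eta_pos eta_mono bnn T] by (auto intro: Max_ge)
      thus ?thesis by simp
    qed
    also have "\<dots> \<le> ?Y obs / \<eta> T + ?Z obs"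
      using bnn[of q "?r (Suc T)"] eta_pos[OF T] by simp
    finally show ?thesis by simp
  qed
  have fin: "finite (set_pmf ?M)" by (rule finite_Pi_bern) simp
  have int: "\<And>g::(nat \<Rightarrow> bool) \<Rightarrow> real. integrable ?M g"
    by (rule integrable_measure_pmf_finite[OF fin])
  have p0: "\<And>i. 1 \<le> i \<Longrightarrow> 0 \<le> p i" using p by (simp add: less_imp_le)
  have p1: "\<And>i. 1 \<le> i \<Longrightarrow> p i \<le> 1" using p by simp
  have EL: "measure_pmf.expectation ?M ?L = (\<Sum>i=1..T. qloss \<alpha> q (rs i))"
  proof -
    have "measure_pmf.expectation ?M ?L = measure_pmf.expectation ?M (\<lambda>obs. \<Sum>i=1..T.
        (qloss \<alpha> q (rs i) / p i) * (if obs i then 1 else 0))"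
      by (intro Bochner_Integration.integral_cong refl sum.cong) auto
    also have "\<dots> = (\<Sum>i=1..T. measure_pmf.expectation ?M
        (\<lambda>obs. (qloss \<alpha> q (rs i) / p i) * (if obs i then 1 else 0)))"
      by (intro Bochner_Integration.integral_sum int)
    also have "\<dots> = (\<Sum>i=1..T. (qloss \<alpha> q (rs i) / p i) * p i)"
      using p0 p1 by (intro sum.cong refl comp_exp) auto
    also have "\<dots> = (\<Sum>i=1..T. qloss \<alpha> q (rs i))"
      using p by (intro sum.cong refl) (auto simp: less_imp_le, metis less_irrefl)
    finally show ?thesis .
  qed
  have pmin: "0 < Min (p ` {1..T})" using T p by (auto simp: Min_gr_iff)
  have EZ: "measure_pmf.expectation ?M ?Z \<le> 1 / (2 * \<mu> * Min (p ` {1..T})) * (\<Sum>i=1..T. \<eta> i)"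
  proof -
    have "measure_pmf.expectation ?M ?Z = measure_pmf.expectation ?M (\<lambda>obs. \<Sum>i=1..T.
        (\<eta> i / (2 * \<mu> * (p i)\<^sup>2)) * (if obs i then 1 else 0))"
      by (intro Bochner_Integration.integral_cong refl sum.cong) auto
    also have "\<dots> = (\<Sum>i=1..T. measure_pmf.expectation ?M
        (\<lambda>obs. (\<eta> i / (2 * \<mu> * (p i)\<^sup>2)) * (if obs i then 1 else 0)))"
      by (intro Bochner_Integration.integral_sum int)
    also have "\<dots> = (\<Sum>i=1..T. (\<eta> i / (2 * \<mu> * (p i)\<^sup>2)) * p i)"
      using p0 p1 by (intro sum.cong refl comp_exp) auto
    also have "\<dots> \<le> (\<Sum>i=1..T. 1 / (2 * \<mu> * Min (p ` {1..T})) * \<eta> i)"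
    proof (rule sum_mono)
      fix i assume i: "i \<in> {1..T}"
      have pi: "0 < p i" "Min (p ` {1..T}) \<le> p i" using p i by auto
      have "(\<eta> i / (2 * \<mu> * (p i)\<^sup>2)) * p i = \<eta> i / (2 * \<mu> * p i)"
        using pi by (simp add: power2_eq_square)
      also have "\<dots> \<le> \<eta> i / (2 * \<mu> * Min (p ` {1..T}))"
        using pi pmin mu eta_pos[of i] i
        by (intro divide_left_mono mult_left_mono mult_pos_pos) auto
      finally show "(\<eta> i / (2 * \<mu> * (p i)\<^sup>2)) * p i \<le> 1 / (2 * \<mu> * Min (p ` {1..T})) * \<eta> i" by simp
    qed
    also have "\<dots> = 1 / (2 * \<mu> * Min (p ` {1..T})) * (\<Sum>i=1..T. \<eta> i)"
      by (simp add: sum_distrib_left)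
    finally show ?thesis .
  qed
  have INF: "(INF u. \<Sum>i=1..T. qloss \<alpha> u (rs i)) = (\<Sum>i=1..T. qloss \<alpha> q (rs i))"
  proof (rule antisym)
    show "(INF u. \<Sum>i=1..T. qloss \<alpha> u (rs i)) \<le> (\<Sum>i=1..T. qloss \<alpha> q (rs i))"
      by (rule cINF_lower) (use q in \<open>auto simp: bdd_below_def\<close>)
    show "(\<Sum>i=1..T. qloss \<alpha> q (rs i)) \<le> (INF u. \<Sum>i=1..T. qloss \<alpha> u (rs i))"
      by (rule cINF_greatest) (use q in auto)
  qed
  have "measure_pmf.expectation ?M ?X \<le> measure_pmf.expectation ?M (\<lambda>obs. ?L obs + ?Y obs / \<eta> T + ?Z obs)"
    by (rule integral_mono[OF int int path])
  also have "\<dots> = measure_pmf.expectation ?M ?L + measure_pmf.expectation ?M ?Y / \<eta> T + measure_pmf.expectation ?M ?Z"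
    by (simp only: Bochner_Integration.integral_add[OF int int] integral_divide_zero)
  finally show ?thesis using EL EZ INF by linarith
qed

end
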